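(* Every Petri net and every VASS, viewed as an ordered functional transition system, is cover-flattable: for every initial state $x_0$, $(\mathfrak X,x_0)$ is cover-flattable.
   Context: A VASS of dimension $k$ has a finite set $Q$ of control states and finitely many transitions, each given by $q,q'\in Q$ and $\vec a,\vec b\in\mathbb N^k$ and acting as the partial map $f(q,\vec x)=(q',\vec x+\vec b-\vec a)$, defined on states of control state $q$ with $\vec x\ge\vec a$. The state space $Q\times\mathbb N^k$ is ordered by $(q,\vec x)\le(q',\vec y)$ iff $q=q'$ and $\vec x\le\vec y$ componentwise. A Petri net on $k$ places is the case of a single control state (state space $\mathbb N^k$). Ordered functional transition system: partial order plus finite set of partial monotonic maps (upward-closed domain, monotone on it), with $x\to f(x)$. $Cover(x)=\downarrow Post^*(\downarrow x)$, $Post^*$ the reachability set. Flat: there are finitely many words $w_1,\dots,w_k$ over the set of transition maps such that every fireable sequence of transitions (from the initial state considered) lies in $w_1^*\cdots w_k^*$. A morphism $\varphi:\mathfrak X_1\to\mathfrak X$ maps states to states and transition maps to transition maps such that $s'=f_1(s)$ implies $\varphi(s)\in\operatorname{dom}\varphi(f_1)$ and $\varphi(s')=\varphi(f_1)(\varphi(s))$. A monotonic flattening of $\mathfrak X$ is $(\mathfrak X_1,\varphi)$ with $\mathfrak X_1$ a flat ordered functional transition system and $\varphi$ a morphism monotone on states. $(\mathfrak X,x_0)$ is cover-flattable iff there are a monotonic flattening $(\mathfrak X_1,\varphi)$ of $\mathfrak X$ and a state $x_1$ of $\mathfrak X_1$ with $\varphi(x_1)=x_0$ and $Cover_{\mathfrak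 X}(x_0)=\downarrow\varphi\langle Cover_{\mathfrak X_1}(x_1)\rangle$. *)

theory Defs
  imports Main
begin

definition partial_monotone :: "('s \<Rightarrow> 's \<Rightarrow> bool) \<Rightarrow> ('s \<Rightarrow> 's option) \<Rightarrow> bool" where
  "partial_monotone le f \<longleftrightarrow>
     (\<forall>x y. le x y \<and> f x \<noteq> None \<longrightarrow> f y \<noteq> None \<and> le (the (f x)) (the (f y)))"

definition ofts :: "('s \<Rightarrow> 's \<Rightarrow> bool) \<Rightarrow> ('s \<Rightarrow> 's option) set \<Rightarrow> bool" where
  "ofts le F \<longleftrightarrow> reflp le \<and> transp le \<and> antisymp le \<and> finite F \<and>
     (\<forall>f\<in>F. partial_monotone le f)"

fun fire :: "('s \<Rightarrow> 's option) list \<Rightarrow> 's \<Rightarrow> 's option" where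
  "fire [] x = Some x"
| "fire (f # w) x = Option.bind (f x) (fire w)"

definition post_star :: "('s \<Rightarrow> 's option) set \<Rightarrow> 's set \<Rightarrow> 's set" where
  "post_star F S = {y. \<exists>x\<in>S. \<exists>w\<in>lists F. fire w x = Some y}"

definition down :: "('s \<Rightarrow> 's \<Rightarrow> bool) \<Rightarrow> 's set \<Rightarrow> 's set" where
  "down le S = {y. \<exists>x\<in>S. le y x}"

definition cover :: "('s \<Rightarrow> 's \<Rightarrow> bool) \<Rightarrow> ('s \<Rightarrow> 's option) set \<Rightarrow> 's \<Rightarrow> 's set" where
  "cover le F x = down le (post_star F (down le {x}))"

definition in_flat_lang :: "'a list list \<Rightarrow> 'a list \<Rightarrow> bool" where
  "in_flat_lang ws w \<longleftrightarrow>
     (\<exists>ns. length ns = length ws \<and>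
           w = concat (map (\<lambda>(wi, n). concat (replicate n wi)) (zip ws ns)))"

definition flat :: "('s \<Rightarrow> 's option) set \<Rightarrow> 's \<Rightarrow> bool" where
  "flat F x \<longleftrightarrow> (\<exists>ws. set ws \<subseteq> lists F \<and>
     (\<forall>w\<in>lists F. fire w x \<noteq> None \<longrightarrow> in_flat_lang ws w))"

definition ofts_morphism ::
  "('s1 \<Rightarrow> 's1 option) set \<Rightarrow> ('s \<Rightarrow> 's option) set \<Rightarrow> ('s1 \<Rightarrow> 's)
   \<Rightarrow> (('s1 \<Rightarrow> 's1 option) \<Rightarrow> ('s \<Rightarrow> 's option)) \<Rightarrow> bool" where
  "ofts_morphism F1 F phis phit \<longleftrightarrow>
     (\<forall>f1\<in>F1. phit f1 \<in> F) \<and>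
     (\<forall>f1\<in>F1. \<forall>s s'. f1 s = Some s' \<longrightarrow> phit f1 (phis s) = Some (phis s'))"

text \<open>Cover-flattability. The flat system's state type is fixed to \<open>nat\<close>.\<close>
definition cover_flattable :: "('s \<Rightarrow> 's \<Rightarrow> bool) \<Rightarrow> ('s \<Rightarrow> 's option) set \<Rightarrow> 's \<Rightarrow> bool" where
  "cover_flattable le F x0 \<longleftrightarrow>
     (\<exists>(le1 :: nat \<Rightarrow> nat \<Rightarrow> bool) F1 phis phit x1.
        ofts le1 F1 \<and> flat F1 x1 \<and>
        ofts_morphism F1 F phis phit \<and>
        (\<forall>s t. le1 s t \<longrightarrow> le (phis s) (phis t)) \<and>
        phis x1 = x0 \<and>
        cover le F x0 = down le (phis ` cover le1 F1 x1))"

text \<open>A VASS transition \<open>(q, a, b, q')\<close>; control states of finite type \<open>'q\<close>,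
  counters indexed by finite type \<open>'k\<close> (dimension \<open>CARD('k)\<close>).\<close>
definition vass_le :: "('q \<times> ('k \<Rightarrow> nat)) \<Rightarrow> ('q \<times> ('k \<Rightarrow> nat)) \<Rightarrow> bool" where
  "vass_le s t \<longleftrightarrow> fst s = fst t \<and> (\<forall>i. snd s i \<le> snd t i)"

definition vass_map :: "('q \<times> ('k \<Rightarrow> nat) \<times> ('k \<Rightarrow> nat) \<times> 'q)
    \<Rightarrow> ('q \<times> ('k \<Rightarrow> nat)) \<Rightarrow> ('q \<times> ('k \<Rightarrow> nat)) option" where
  "vass_map tr s = (case tr of (q, a, b, q') \<Rightarrow>
     if fst s = q \<and> (\<forall>i. a i \<le> snd s i)
     then Some (q', \<lambda>i. snd s i + b i - a i) else None)"

definition pn_le :: "('k \<Rightarrow> nat) \<Rightarrow> ('k \<Rightarrow> nat) \<Rightarrow> bool" where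
  "pn_le x y \<longleftrightarrow> (\<forall>i. x i \<le> y i)"

definition pn_map :: "(('k \<Rightarrow> nat) \<times> ('k \<Rightarrow> nat)) \<Rightarrow> ('k \<Rightarrow> nat) \<Rightarrow> ('k \<Rightarrow> nat) option" where
  "pn_map tr x = (case tr of (a, b) \<Rightarrow>
     if (\<forall>i. a i \<le> x i) then Some (\<lambda>i. x i + b i - a i) else None)"

end

theory Submission
  imports Defs "HOL-Library.Countable_Set" "HOL-Library.Extended_Nat" "HOL-Library.Ramsey"
begin

lemma fire_append: "fire (v @ w) x = Option.bind (fire v x) (fire w)"
proof (induction v arbitrary: x)
  case Nil then show ?case by simp
next
  case (Cons f v) then show ?case by (cases "f x") auto
qed

lemma bind_fire_Nil[simp]: "Option.bind x (fire []) = x"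
  by (cases x) auto

lemma ifl_Nil[simp]: "in_flat_lang [] w \<longleftrightarrow> w = []"
  by (simp add: in_flat_lang_def)

lemma ifl_Cons: "in_flat_lang (u # ws) w \<longleftrightarrow> (\<exists>n v. w = concat (replicate n u) @ v \<and> in_flat_lang ws v)"
proof
  assume "in_flat_lang (u # ws) w"
  then obtain ns where "length ns = length (u#ws)" "w = concat (map (\<lambda>(wi, n). concat (replicate n wi)) (zip (u#ws) ns))"
    unfolding in_flat_lang_def by blast
  then show "\<exists>n v. w = concat (replicate n u) @ v \<and> in_flat_lang ws v"
    unfolding in_flat_lang_def by (cases ns) auto
next
  assume "\<exists>n v. w = concat (replicate n u) @ v \<and> in_flat_lang ws v"
  then obtain n v ns where "w = concat (replicate n u) @ v" "length ns = length ws"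
     "v = concat (map (\<lambda>(wi, n). concat (replicate n wi)) (zip ws ns))"
    unfolding in_flat_lang_def by blast
  then show "in_flat_lang (u # ws) w" unfolding in_flat_lang_def
    by (intro exI[of _ "n # ns"]) auto
qed

lemma ifl_empty: "in_flat_lang ws []"
  by (induction ws) (auto simp: ifl_Cons intro: exI[of _ 0])

lemma ifl_append: "in_flat_lang ws1 w1 \<Longrightarrow> in_flat_lang ws2 w2 \<Longrightarrow> in_flat_lang (ws1 @ ws2) (w1 @ w2)"
proof (induction ws1 arbitrary: w1)
  case Nil then show ?case by simp
next
  case (Cons u ws1)
  then obtain n v where "w1 = concat (replicate n u) @ v" "in_flat_lang ws1 v" by (auto simp: ifl_Cons)
  with Cons.IH[of v] Cons.prems show ?case unfolding append_Cons ifl_Cons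
    by (intro exI[of _ n] exI[of _ "v @ w2"]) auto
qed

lemma ifl_split: "in_flat_lang (ws1 @ ws2) w \<Longrightarrow> \<exists>w1 w2. w = w1 @ w2 \<and> in_flat_lang ws1 w1 \<and> in_flat_lang ws2 w2"
proof (induction ws1 arbitrary: w)
  case Nil then show ?case by auto
next
  case (Cons u ws1)
  then obtain n v where "w = concat (replicate n u) @ v" "in_flat_lang (ws1 @ ws2) v" by (auto simp: ifl_Cons)
  moreover from Cons.IH[OF \<open>in_flat_lang (ws1 @ ws2) v\<close>] obtain w1 w2 where
    "v = w1 @ w2" "in_flat_lang ws1 w1" "in_flat_lang ws2 w2" by blast
  ultimately show ?case unfolding append_Cons ifl_Cons
    by (intro exI[of _ "concat (replicate n u) @ w1"] exI[of _ w2]) auto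
qed

lemma ifl_snoc: "in_flat_lang ws w \<Longrightarrow> in_flat_lang (ws @ [u]) (w @ concat (replicate n u))"
  using ifl_append[of ws w "[u]" "concat (replicate n u)"] by (auto simp: ifl_Cons)

lemma ifl_lists: "in_flat_lang ws w \<Longrightarrow> set ws \<subseteq> lists A \<Longrightarrow> w \<in> lists A"
proof (induction ws arbitrary: w)
  case Nil then show ?case by auto
next
  case (Cons u ws)
  then obtain n v where "w = concat (replicate n u) @ v" "in_flat_lang ws v" by (auto simp: ifl_Cons)
  with Cons show ?case by auto
qed

lemma ifl_map: "in_flat_lang ws w \<Longrightarrow> in_flat_lang (map (map h) ws) (map h w)"
proof (induction ws arbitrary: w)
  case Nil then show ?case by auto
next
  case (Cons u ws)
  then obtain n v where "w = concat (replicate n u) @ v" "in_flat_lang ws v" by (auto simp: ifl_Cons)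
  with Cons.IH[of v] show ?case
    by (auto simp: ifl_Cons map_concat intro!: exI[of _ n])
qed

lemma ifl_concat: "in_flat_lang ws w \<Longrightarrow> ws \<in> set L \<Longrightarrow> in_flat_lang (concat L) w"
proof -
  assume a: "in_flat_lang ws w" "ws \<in> set L"
  then obtain L1 L2 where "L = L1 @ ws # L2" by (meson split_list)
  then show ?thesis using ifl_append[OF ifl_empty ifl_append[OF a(1) ifl_empty]]
    by (simp add: ifl_empty)
qed

definition letters :: "'a list \<Rightarrow> 'a list list" where
  "letters u = map (\<lambda>a. [a]) u"

definition expand :: "'a list list \<Rightarrow> 'a list list" where
  "expand ws = concat (map (\<lambda>u. u # letters u) ws)"

lemma expand_Cons: "expand (u # ws) = u # (letters u @ expand ws)"
  by (simp add: expand_def)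

lemma letters_prefix: "u = p @ r \<Longrightarrow> in_flat_lang (letters u) p"
proof (induction u arbitrary: p)
  case Nil then show ?case by (simp add: letters_def)
next
  case (Cons a u)
  show ?case
  proof (cases p)
    case Nil then show ?thesis by (simp add: ifl_empty)
  next
    case (Cons b p')
    with Cons.prems have "b = a" "u = p' @ r" by auto
    with Cons.IH[of p'] Cons show ?thesis
      by (auto simp: letters_def ifl_Cons intro!: exI[of _ 1])
  qed
qed

lemma prefix_rep: "concat (replicate n u) = p @ r \<Longrightarrow> \<exists>j q s. p = concat (replicate j u) @ q \<and> u = q @ s"
proof (induction n arbitrary: p)
  case 0 then show ?case by (auto intro!: exI[of _ 0])
next
  case (Suc n)
  then have "u @ concat (replicate n u) = p @ r" by simp
  then consider (a) us where "u = p @ us" | (b) us where "p = u @ us" "us @ r = concat (replicate n u)"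
    by (metis append_eq_append_conv2)
  then show ?case
  proof cases
    case a then show ?thesis by (auto intro!: exI[of _ 0])
  next
    case b
    with Suc.IH[of us] obtain j q s where "us = concat (replicate j u) @ q" "u = q @ s" by metis
    with b show ?thesis by (auto intro!: exI[of _ "Suc j"])
  qed
qed

lemma letters_prefix_closed: "in_flat_lang (letters u) (p @ r) \<Longrightarrow> in_flat_lang (letters u) p"
proof (induction u arbitrary: p r)
  case Nil then show ?case by (simp add: letters_def)
next
  case (Cons a u)
  then obtain n v where nv: "p @ r = concat (replicate n [a]) @ v" "in_flat_lang (letters u) v"
    by (auto simp: ifl_Cons letters_def)
  then consider (a) us where "concat (replicate n [a]) = p @ us" | (b) us where "p = concat (replicate n [a]) @ us" "us @ r = v"
    by (metis append_eq_append_conv2)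
  then show ?case
  proof cases
    case a
    from prefix_rep[OF a] obtain j q s where "p = concat (replicate j [a]) @ q" "[a] = q @ s" by blast
    then consider "p = concat (replicate j [a])" | "p = concat (replicate (Suc j) [a])"
      by (cases q) (auto simp: replicate_append_same)
    then show ?thesis
    proof cases
      case 1 then show ?thesis using ifl_empty[of "letters u"]
        unfolding letters_def by (auto simp: ifl_Cons intro!: exI[of _ j] exI[of _ "[]"])
    next
      case 2 then show ?thesis using ifl_empty[of "letters u"]
        unfolding letters_def by (simp only: list.map ifl_Cons) (intro exI[of _ "Suc j"] exI[of _ "[]"], simp)
    qed
  next
    case b
    with Cons.IH[of us r] nv show ?thesis by (auto simp: letters_def ifl_Cons)
  qed
qed

lemma expand_contains: "in_flat_lang ws w \<Longrightarrow> in_flat_lang (expand ws) w"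
proof (induction ws arbitrary: w)
  case Nil then show ?case by (simp add: expand_def)
next
  case (Cons u ws)
  then obtain n v where "w = concat (replicate n u) @ v" "in_flat_lang ws v" by (auto simp: ifl_Cons)
  with Cons.IH[of v] show ?case
    using ifl_append[OF ifl_empty[of "letters u"], of "expand ws" v]
    by (auto simp: expand_Cons ifl_Cons)
qed

lemma expand_prefix_closed: "in_flat_lang (expand ws) (p @ r) \<Longrightarrow> in_flat_lang (expand ws) p"
proof (induction ws arbitrary: p r)
  case Nil then show ?case by (simp add: expand_def)
next
  case (Cons u ws)
  then obtain n v where nv: "p @ r = concat (replicate n u) @ v" "in_flat_lang (letters u @ expand ws) v"
    by (auto simp: ifl_Cons expand_Cons)
  from ifl_split[OF nv(2)] obtain v1 v2 where v: "v = v1 @ v2" "in_flat_lang (letters u) v1" "in_flat_lang (expand ws) v2"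
    by blast
  from nv(1) consider (a) us where "concat (replicate n u) = p @ us" | (b) us where "p = concat (replicate n u) @ us" "us @ r = v"
    by (metis append_eq_append_conv2)
  then show ?case
  proof cases
    case a
    from prefix_rep[OF a] obtain j q s where "p = concat (replicate j u) @ q" "u = q @ s" by blast
    then show ?thesis using ifl_append[OF letters_prefix[of u q s] ifl_empty[of "expand ws"]]
      by (auto simp: expand_Cons ifl_Cons)
  next
    case b
    from b(2) v(1) consider (c) zs where "v1 = us @ zs" | (d) zs where "us = v1 @ zs" "zs @ r = v2"
      by (metis append_eq_append_conv2)
    then show ?thesis
    proof cases
      case c
      then have "in_flat_lang (letters u) us" using letters_prefix_closed v(2) by blast
      then show ?thesis using ifl_append[OF _ ifl_empty[of "expand ws"]] b
        by (auto simp: expand_Cons ifl_Cons)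
    next
      case d
      then have "in_flat_lang (expand ws) zs" using Cons.IH v(3) by blast
      then show ?thesis using ifl_append[OF v(2)] b d
        by (auto simp: expand_Cons ifl_Cons)
    qed
  qed
qed

lemma expand_lists: "set ws \<subseteq> lists A \<Longrightarrow> set (expand ws) \<subseteq> lists A"
  by (auto simp: expand_def letters_def)


lemma fire_lists_image:
  assumes "v \<in> lists (g ` L)"
  shows "\<exists>w. w \<in> lists L \<and> v = map g w"
  using assms by (metis imageE lists_image)

lemma gen_flattable:
  fixes le :: "'s \<Rightarrow> 's \<Rightarrow> bool" and L :: "'l set" and m :: "'l \<Rightarrow> 's \<Rightarrow> 's option"
  assumes finL: "finite L" and refl: "reflp le" and trans: "transp le"
    and mono: "\<And>l x y x'. l \<in> L \<Longrightarrow> le x y \<Longrightarrow> m l x = Some x' \<Longrightarrow> \<exists>y'. m l y = Some y' \<and> le x' y'"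
    and main: "\<exists>ws. set ws \<subseteq> lists L \<and> (\<forall>w y. w \<in> lists L \<longrightarrow> fire (map m w) x0 = Some y \<longrightarrow>
                  (\<exists>w' y'. in_flat_lang ws w' \<and> fire (map m w') x0 = Some y' \<and> le y y'))"
  shows "cover_flattable le (m ` L) x0"
proof -
  obtain ws where wsL: "set ws \<subseteq> lists L" and wsm: "\<And>w y. w \<in> lists L \<Longrightarrow> fire (map m w) x0 = Some y \<Longrightarrow>
                  (\<exists>w' y'. in_flat_lang ws w' \<and> fire (map m w') x0 = Some y' \<and> le y y')"
    using main by blast
  define W where "W = {w. w \<in> lists L \<and> fire (map m w) x0 \<noteq> None \<and> in_flat_lang (expand ws) w}"
  have cW: "countable W" unfolding W_def
    by (rule countable_subset[of _ "lists L"]) (auto intro: countable_finite finL)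
  define enc where "enc = to_nat_on W"
  define dec where "dec = from_nat_into W"
  have dec_enc[simp]: "dec (enc w) = w" if "w \<in> W" for w
    using that cW by (simp add: enc_def dec_def)
  have enc_inj: "enc u = enc v \<longleftrightarrow> u = v" if "u \<in> W" "v \<in> W" for u v
    using that cW by (simp add: enc_def)
  have NilW: "[] \<in> W" unfolding W_def by (simp add: ifl_empty)
  have prefW: "u \<in> W" if "u @ v \<in> W" for u v
    using that expand_prefix_closed unfolding W_def by (auto simp: fire_append split: Option.bind_splits)
  define g where "g l = (\<lambda>n. if n \<in> enc ` W \<and> dec n @ [l] \<in> W then Some (enc (dec n @ [l])) else None)" for l
  define F1 where "F1 = g ` L"
  define x1 where "x1 = enc []"
  define phis where "phis n = the (fire (map m (dec n)) x0)" for n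
  define phit where "phit f = m (SOME l. l \<in> L \<and> f = g l)" for f
  have g_enc: "g l (enc u) = (if u @ [l] \<in> W then Some (enc (u @ [l])) else None)" if "u \<in> W" for u l
    using that by (auto simp: g_def)
  have fire_fwd: "fire (map g w) (enc u) = Some (enc (u @ w))" if "u @ w \<in> W" for u w
    using that
  proof (induction w arbitrary: u)
    case Nil then show ?case by simp
  next
    case (Cons l w)
    then have "u @ [l] \<in> W" "u \<in> W" using prefW[of "u @ [l]" w] prefW[of u "l # w"] by auto
    with Cons.IH[of "u @ [l]"] Cons.prems show ?case by (simp add: g_enc)
  qed
  have fire_bwd: "\<exists>w. w \<in> lists L \<and> v = map g w \<and> u @ w \<in> W \<and> n = enc (u @ w)"
    if "u \<in> W" "v \<in> lists F1" "fire v (enc u) = Some n" for u v n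
    using that
  proof (induction v arbitrary: u)
    case Nil then show ?case by (intro exI[of _ "[]"]) auto
  next
    case (Cons f v)
    then obtain l where l: "l \<in> L" "f = g l" by (auto simp: F1_def)
    with Cons.prems obtain n1 where n1: "g l (enc u) = Some n1" "fire v n1 = Some n"
      by (cases "g l (enc u)") auto
    with Cons.prems have "u @ [l] \<in> W" "n1 = enc (u @ [l])" by (auto simp: g_enc split: if_splits)
    with Cons.IH[of "u @ [l]"] Cons.prems n1 obtain w where
      "w \<in> lists L" "v = map g w" "u @ [l] @ w \<in> W" "n = enc (u @ [l] @ w)" by auto
    with l show ?case by (intro exI[of _ "l # w"]) auto
  qed
  have reach1: "post_star F1 {x1} = enc ` W"
  proof
    show "post_star F1 {x1} \<subseteq> enc ` W"
      using fire_bwd[OF NilW] by (auto simp: post_star_def x1_def)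
  next
    show "enc ` W \<subseteq> post_star F1 {x1}"
    proof
      fix n assume "n \<in> enc ` W"
      then obtain w where w: "w \<in> W" "n = enc w" by auto
      then have "w \<in> lists L" by (simp add: W_def)
      then have "map g w \<in> lists F1" by (auto simp: F1_def)
      with fire_fwd[of "[]" w] w show "n \<in> post_star F1 {x1}"
        by (auto simp: post_star_def x1_def)
    qed
  qed
  have cov1: "cover (=) F1 x1 = enc ` W"
    using reach1 by (simp add: cover_def down_def)
  have phis_enc: "fire (map m w) x0 = Some (phis (enc w))" if "w \<in> W" for w
    using that by (auto simp: phis_def W_def)
  have ofts1: "ofts (=) F1"
    by (auto simp: ofts_def partial_monotone_def F1_def finL reflp_def transp_def antisymp_def)
  have flat1: "flat F1 x1"
    unfolding flat_def
  proof (intro exI[of _ "map (map g) (expand ws)"] conjI ballI impI)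
    show "set (map (map g) (expand ws)) \<subseteq> lists F1"
    proof
      fix v assume "v \<in> set (map (map g) (expand ws))"
      then obtain u where u: "u \<in> set (expand ws)" "v = map g u" by auto
      with expand_lists[OF wsL] have "u \<in> lists L" by auto
      with u show "v \<in> lists F1" by (auto simp: F1_def)
    qed
  next
    fix v assume "v \<in> lists F1" "fire v x1 \<noteq> None"
    then obtain n where "fire v (enc []) = Some n" by (auto simp: x1_def)
    with fire_bwd[OF NilW \<open>v \<in> lists F1\<close>] obtain w where "v = map g w" "w \<in> W" by auto
    then show "in_flat_lang (map (map g) (expand ws)) v"
      using ifl_map by (auto simp: W_def)
  qed
  have morph: "ofts_morphism F1 (m ` L) phis phit"
    unfolding ofts_morphism_def
  proof (intro conjI ballI allI impI)
    fix f1 assume "f1 \<in> F1"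
    then have ex: "\<exists>l. l \<in> L \<and> f1 = g l" by (auto simp: F1_def)
    define l where "l = (SOME l. l \<in> L \<and> f1 = g l)"
    have l: "l \<in> L" "f1 = g l" using someI_ex[OF ex] by (auto simp: l_def)
    have pt: "phit f1 = m l" by (simp add: phit_def l_def)
    show "phit f1 \<in> m ` L" using pt l by auto
    fix s s' assume fs: "f1 s = Some s'"
    then obtain u where u: "u \<in> W" "s = enc u" "u @ [l] \<in> W" "s' = enc (u @ [l])"
      using l by (auto simp: g_def split: if_splits)
    from phis_enc[OF u(3)] have "fire (map m u @ [m l]) x0 = Some (phis s')" using u by simp
    then show "phit f1 (phis s) = Some (phis s')"
      using phis_enc[OF u(1)] u pt by (simp add: fire_append)
  qed
  have phis_x1: "phis x1 = x0" using NilW by (simp add: phis_def x1_def)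
  have reachW: "phis ` enc ` W = {y. \<exists>w\<in>W. fire (map m w) x0 = Some y}"
  proof (rule set_eqI, rule iffI)
    fix y assume "y \<in> phis ` enc ` W"
    then obtain w where "w \<in> W" "y = phis (enc w)" by blast
    then show "y \<in> {y. \<exists>w\<in>W. fire (map m w) x0 = Some y}" using phis_enc by blast
  next
    fix y assume "y \<in> {y. \<exists>w\<in>W. fire (map m w) x0 = Some y}"
    then obtain w where "w \<in> W" "fire (map m w) x0 = Some y" by blast
    then have "y = phis (enc w)" using phis_enc by simp
    then show "y \<in> phis ` enc ` W" using \<open>w \<in> W\<close> by blast
  qed
  have monofire: "\<exists>y'. fire (map m w) y = Some y' \<and> le x' y'"
    if "w \<in> lists L" "le x y" "fire (map m w) x = Some x'" for w x y x'
    using that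
  proof (induction w arbitrary: x y)
    case Nil then show ?case by simp
  next
    case (Cons l w)
    then obtain x1 where "m l x = Some x1" "fire (map m w) x1 = Some x'" by (cases "m l x") auto
    with mono[of l x y x1] Cons obtain y1 where "m l y = Some y1" "le x1 y1" by auto
    with Cons.IH[of x1 y1] \<open>fire (map m w) x1 = Some x'\<close> Cons.prems show ?case by auto
  qed
  have cov_eq: "cover le (m ` L) x0 = down le (phis ` cover (=) F1 x1)"
  proof
    show "cover le (m ` L) x0 \<subseteq> down le (phis ` cover (=) F1 x1)"
    proof
      fix z assume "z \<in> cover le (m ` L) x0"
      then obtain x v y where zy: "le z y" "le x x0" "v \<in> lists (m ` L)" "fire v x = Some y"
        unfolding cover_def down_def post_star_def by blast
      obtain w where w: "w \<in> lists L" "v = map m w" using fire_lists_image[OF zy(3)] by blast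
      with monofire zy obtain y1 where y1: "fire (map m w) x0 = Some y1" "le y y1" by blast
      from wsm[OF w(1) y1(1)] obtain w' y' where w': "in_flat_lang ws w'" "fire (map m w') x0 = Some y'" "le y1 y'"
        by blast
      have "w' \<in> lists L" using ifl_lists[OF w'(1) wsL] .
      moreover have "in_flat_lang (expand ws) w'" using expand_contains[OF w'(1)] .
      ultimately have "w' \<in> W" using w'(2) unfolding W_def by simp
      then have "y' \<in> {y. \<exists>w\<in>W. fire (map m w) x0 = Some y}" using w'(2) by blast
      then have "y' \<in> phis ` cover (=) F1 x1" unfolding cov1 reachW .
      moreover have "le z y'" using zy y1 w' trans by (meson transpD)
      ultimately show "z \<in> down le (phis ` cover (=) F1 x1)" by (auto simp: down_def)
    qed
  next
    show "down le (phis ` cover (=) F1 x1) \<subseteq> cover le (m ` L) x0"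
    proof
      fix z assume "z \<in> down le (phis ` cover (=) F1 x1)"
      then obtain w y where "le z y" "w \<in> W" "fire (map m w) x0 = Some y"
        using cov1 reachW by (auto simp: down_def)
      moreover have "map m w \<in> lists (m ` L)" using \<open>w \<in> W\<close> by (auto simp: W_def)
      ultimately show "z \<in> cover le (m ` L) x0"
        using refl by (auto simp: cover_def down_def post_star_def reflp_def)
    qed
  qed
  have mon: "\<forall>s t. s = t \<longrightarrow> le (phis s) (phis t)" using refl by (simp add: reflp_def)
  show ?thesis unfolding cover_flattable_def
    using ofts1 flat1 morph phis_x1 cov_eq mon by blast
qed


type_synonym ('q,'k) tr = "'q \<times> ('k \<Rightarrow> nat) \<times> ('k \<Rightarrow> nat) \<times> 'q"
type_synonym ('q,'k) ost = "'q \<times> ('k \<Rightarrow> enat)"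

definition omap :: "('q,'k) tr \<Rightarrow> ('q,'k) ost \<Rightarrow> ('q,'k) ost option" where
  "omap t e = (case t of (q, a, b, q') \<Rightarrow>
     if fst e = q \<and> (\<forall>i. enat (a i) \<le> snd e i)
     then Some (q', \<lambda>i. snd e i + enat (b i) - enat (a i)) else None)"

definition ole :: "('q,'k) ost \<Rightarrow> ('q,'k) ost \<Rightarrow> bool" where
  "ole e f \<longleftrightarrow> fst e = fst f \<and> (\<forall>i. snd e i \<le> snd f i)"

definition ostep :: "('q,'k) tr set \<Rightarrow> ('q,'k) ost \<Rightarrow> ('q,'k) ost \<Rightarrow> bool" where
  "ostep T e f \<longleftrightarrow> (\<exists>t\<in>T. omap t e = Some f)"

definition emb :: "'q \<times> ('k \<Rightarrow> nat) \<Rightarrow> ('q,'k) ost" where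
  "emb y = (fst y, \<lambda>i. enat (snd y i))"

definition Rel :: "nat \<Rightarrow> 'q \<times> ('k \<Rightarrow> nat) \<Rightarrow> ('q,'k) ost \<Rightarrow> bool" where
  "Rel N y e \<longleftrightarrow> fst y = fst e \<and>
     (\<forall>i. (snd e i = \<infinity> \<longrightarrow> N \<le> snd y i) \<and> (\<forall>m. snd e i = enat m \<longrightarrow> m \<le> snd y i))"

definition cost :: "('q,'k::finite) tr \<Rightarrow> nat" where
  "cost t = (\<Sum>i\<in>UNIV. fst (snd t) i)"

definition wcost :: "('q,'k::finite) tr list \<Rightarrow> nat" where
  "wcost u = sum_list (map cost u)"

definition approx :: "('q,'k) tr set \<Rightarrow> 'q \<times> ('k \<Rightarrow> nat) \<Rightarrow> ('q,'k) ost \<Rightarrow> bool" where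
  "approx T x0 e \<longleftrightarrow> (\<exists>ws. set ws \<subseteq> lists T \<and>
     (\<forall>N. \<exists>w y. in_flat_lang ws w \<and> fire (map vass_map w) x0 = Some y \<and> Rel N y e))"

definition acc :: "('q,'k) ost \<Rightarrow> ('q,'k) ost \<Rightarrow> ('q,'k) ost" where
  "acc e e' = (fst e', \<lambda>i. if snd e i < snd e' i then \<infinity> else snd e' i)"

lemma omap_emb: "omap t (emb y) = map_option emb (vass_map t y)"
  by (cases t) (auto simp: omap_def vass_map_def emb_def)

lemma omap_SomeE:
  assumes "omap t e = Some e'"
  obtains q a b q' where "t = (q, a, b, q')" "fst e = q" "\<And>i. enat (a i) \<le> snd e i"
    "e' = (q', \<lambda>i. snd e i + enat (b i) - enat (a i))"
  using assms by (cases t) (auto simp: omap_def split: if_splits)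

lemma enat_step_inf: "(x + enat b - enat a = \<infinity>) \<longleftrightarrow> x = \<infinity>"
  by (cases x) auto

lemma omap_inf: "omap t e = Some e' \<Longrightarrow> (snd e' i = \<infinity> \<longleftrightarrow> snd e i = \<infinity>)"
  by (erule omap_SomeE) (simp add: enat_step_inf)

lemma omap_mono:
  assumes "ole e f" "omap t e = Some e'"
  shows "\<exists>f'. omap t f = Some f' \<and> ole e' f'"
proof -
  from assms(2) obtain q a b q' where t: "t = (q, a, b, q')" "fst e = q" "\<And>i. enat (a i) \<le> snd e i"
    "e' = (q', \<lambda>i. snd e i + enat (b i) - enat (a i))" by (erule omap_SomeE)
  have le: "snd e i \<le> snd f i" for i using assms(1) by (simp add: ole_def)
  have "enat (a i) \<le> snd f i" for i using t(3)[of i] le[of i] by (rule order.trans)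
  moreover have "snd e i + enat (b i) - enat (a i) \<le> snd f i + enat (b i) - enat (a i)" for i
    using le[of i] by (cases "snd e i"; cases "snd f i") auto
  ultimately show ?thesis using t assms(1)
    by (auto simp: omap_def ole_def)
qed

lemma step_rel:
  fixes t :: "('q,'k::finite) tr"
  assumes "omap t e = Some e'" "Rel (N + cost t) y e"
  shows "\<exists>y'. vass_map t y = Some y' \<and> Rel N y' e' \<and>
    (\<forall>i m m'. snd e i = enat m \<longrightarrow> snd e' i = enat m' \<longrightarrow> snd y' i + m = snd y i + m')"
proof -
  from assms(1) obtain q a b q' where t: "t = (q, a, b, q')" "fst e = q" "\<And>i. enat (a i) \<le> snd e i"
    "e' = (q', \<lambda>i. snd e i + enat (b i) - enat (a i))" by (erule omap_SomeE)
  have ac: "a i \<le> cost t" for i unfolding t(1) cost_def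
    by (simp add: member_le_sum)
  have R: "fst y = fst e" "\<And>i. snd e i = \<infinity> \<Longrightarrow> N + cost t \<le> snd y i"
     "\<And>i m. snd e i = enat m \<Longrightarrow> m \<le> snd y i"
    using assms(2) by (auto simp: Rel_def)
  have ay: "a i \<le> snd y i" for i
  proof (cases "snd e i")
    case (enat m) then show ?thesis using t(3)[of i] R(3)[of i m] by simp
  next
    case infinity then show ?thesis using R(2)[of i] ac[of i] by simp
  qed
  define y' where "y' = (q', \<lambda>i. snd y i + b i - a i)"
  have vm: "vass_map t y = Some y'" using ay R(1) t by (simp add: vass_map_def y'_def)
  have "Rel N y' e'"
    unfolding Rel_def
  proof (intro conjI allI impI)
    show "fst y' = fst e'" by (simp add: y'_def t(4))
  next
    fix i assume "snd e' i = \<infinity>"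
    then have "snd e i = \<infinity>" by (simp add: t(4) enat_step_inf)
    then show "N \<le> snd y' i" using R(2)[of i] ac[of i] by (simp add: y'_def)
  next
    fix i m assume m: "snd e' i = enat m"
    then obtain p where p: "snd e i = enat p"
      by (cases "snd e i") (auto simp: t(4))
    then show "m \<le> snd y' i" using m t(3)[of i] R(3)[of i p] by (simp add: t(4) y'_def)
  qed
  moreover have "\<forall>i m m'. snd e i = enat m \<longrightarrow> snd e' i = enat m' \<longrightarrow> snd y' i + m = snd y i + m'"
  proof (intro allI impI)
    fix i m m' assume m: "snd e i = enat m" "snd e' i = enat m'"
    then have "m' = m + b i - a i" "a i \<le> m" "m \<le> snd y i" using t(3)[of i] R(3)[of i m] by (auto simp: t(4))
    then show "snd y' i + m = snd y i + m'" by (simp add: y'_def)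
  qed
  ultimately show ?thesis using vm by blast
qed

lemma word_rel:
  fixes u :: "('q,'k::finite) tr list"
  assumes "fire (map omap u) e = Some e'" "Rel (N + wcost u) y e"
  shows "\<exists>y'. fire (map vass_map u) y = Some y' \<and> Rel N y' e' \<and>
    (\<forall>i m m'. snd e i = enat m \<longrightarrow> snd e' i = enat m' \<longrightarrow> snd y' i + m = snd y i + m')"
  using assms
proof (induction u arbitrary: e y)
  case Nil then show ?case by (simp add: wcost_def Rel_def)
next
  case (Cons t u)
  from Cons.prems obtain e1 where e1: "omap t e = Some e1" "fire (map omap u) e1 = Some e'"
    by (cases "omap t e") auto
  have "Rel ((N + wcost u) + cost t) y e" using Cons.prems(2) by (simp add: wcost_def add.assoc add.commute add.left_commute)
  from step_rel[OF e1(1) this] obtain y1 where y1: "vass_map t y = Some y1" "Rel (N + wcost u) y1 e1"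
    "\<forall>i m m'. snd e i = enat m \<longrightarrow> snd e1 i = enat m' \<longrightarrow> snd y1 i + m = snd y i + m'" by blast
  from Cons.IH[OF e1(2) y1(2)] obtain y' where y': "fire (map vass_map u) y1 = Some y'" "Rel N y' e'"
    "\<forall>i m m'. snd e1 i = enat m \<longrightarrow> snd e' i = enat m' \<longrightarrow> snd y' i + m = snd y1 i + m'" by blast
  have "snd y' i + m = snd y i + m'" if mm: "snd e i = enat m" "snd e' i = enat m'" for i m m'
  proof -
    obtain p where p: "snd e1 i = enat p" using omap_inf[OF e1(1), of i] mm(1) by (cases "snd e1 i") auto
    show ?thesis using y1(3) y'(3) mm p by fastforce
  qed
  then show ?case using y1(1) y' by auto
qed

lemma fire_omap_inf: "fire (map omap u) e = Some e' \<Longrightarrow> (snd e' i = \<infinity> \<longleftrightarrow> snd e i = \<infinity>)"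
proof (induction u arbitrary: e)
  case Nil then show ?case by simp
next
  case (Cons t u)
  then obtain e1 where "omap t e = Some e1" "fire (map omap u) e1 = Some e'" by (cases "omap t e") auto
  with Cons.IH omap_inf show ?case by metis
qed

lemma pump:
  fixes u :: "('q,'k::finite) tr list"
  assumes u: "fire (map omap u) e = Some e'" and le: "ole e e'"
  shows "Rel (N + n * wcost u) y e \<Longrightarrow> \<exists>y'. fire (map vass_map (concat (replicate n u))) y = Some y' \<and>
    Rel N y' e \<and> (\<forall>i m m'. snd e i = enat m \<longrightarrow> snd e' i = enat m' \<longrightarrow> snd y' i = snd y i + n * (m' - m))"
proof (induction n arbitrary: y)
  case 0 then show ?case by (simp add: Rel_def)
next
  case (Suc n)
  have eq: "N + Suc n * wcost u = (N + n * wcost u) + wcost u" by simp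
  have "Rel ((N + n * wcost u) + wcost u) y e" using Suc.prems unfolding eq .
  from word_rel[OF u this] obtain y1 where y1: "fire (map vass_map u) y = Some y1" "Rel (N + n * wcost u) y1 e'"
    "\<forall>i m m'. snd e i = enat m \<longrightarrow> snd e' i = enat m' \<longrightarrow> snd y1 i + m = snd y i + m'" by blast
  have mm: "m \<le> m'" if "snd e i = enat m" "snd e' i = enat m'" for i m m'
    using le that by (auto simp: ole_def elim!: allE[of _ i])
  have "Rel (N + n * wcost u) y1 e"
    unfolding Rel_def
  proof (intro conjI allI impI)
    show "fst y1 = fst e" using y1(2) le by (simp add: Rel_def ole_def)
  next
    fix i assume "snd e i = \<infinity>"
    then have "snd e' i = \<infinity>" using fire_omap_inf[OF u] by simp
    then show "N + n * wcost u \<le> snd y1 i" using y1(2) by (simp add: Rel_def)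
  next
    fix i m assume m: "snd e i = enat m"
    then obtain m' where m': "snd e' i = enat m'" using fire_omap_inf[OF u, of i] by (cases "snd e' i") auto
    then have "m \<le> snd y1 i" using y1(2) mm[OF m m'] by (auto simp: Rel_def elim!: allE[of _ i])
    then show "m \<le> snd y1 i" .
  qed
  from Suc.IH[OF this] obtain y' where y': "fire (map vass_map (concat (replicate n u))) y1 = Some y'"
    "Rel N y' e" "\<forall>i m m'. snd e i = enat m \<longrightarrow> snd e' i = enat m' \<longrightarrow> snd y' i = snd y1 i + n * (m' - m)"
    by blast
  have "snd y' i = snd y i + Suc n * (m' - m)" if "snd e i = enat m" "snd e' i = enat m'" for i m m'
    using y1(3) y'(3) that mm[OF that] by fastforce
  then show ?case using y1(1) y'(1,2) by (auto simp: fire_append)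
qed

lemma approx_init: "approx T x0 (emb x0)"
  unfolding approx_def
  by (intro exI[of _ "[]"] conjI allI exI[of _ "[]"] exI[of _ x0]) (auto simp: Rel_def emb_def)

lemma approx_word:
  fixes T :: "('q,'k::finite) tr set"
  assumes "approx T x0 e" "u \<in> lists T" "fire (map omap u) e = Some e'"
  shows "approx T x0 e'"
proof -
  obtain ws where ws: "set ws \<subseteq> lists T" "\<And>N. \<exists>w y. in_flat_lang ws w \<and> fire (map vass_map w) x0 = Some y \<and> Rel N y e"
    using assms(1) by (auto simp: approx_def)
  show ?thesis unfolding approx_def
  proof (intro exI[of _ "ws @ [u]"] conjI allI)
    show "set (ws @ [u]) \<subseteq> lists T" using ws(1) assms(2) by auto
  next
    fix N
    obtain w y where w: "in_flat_lang ws w" "fire (map vass_map w) x0 = Some y" "Rel (N + wcost u) y e"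
      using ws(2) by blast
    from word_rel[OF assms(3) w(3)] obtain y' where "fire (map vass_map u) y = Some y'" "Rel N y' e'" by blast
    then show "\<exists>w y. in_flat_lang (ws @ [u]) w \<and> fire (map vass_map w) x0 = Some y \<and> Rel N y e'"
      using ifl_snoc[OF w(1), of u 1] w(2)
      by (intro exI[of _ "w @ u"] exI[of _ y']) (auto simp: fire_append)
  qed
qed

lemma approx_acc:
  fixes T :: "('q,'k::finite) tr set"
  assumes "approx T x0 e" "u \<in> lists T" "fire (map omap u) e = Some e'" "ole e e'"
  shows "approx T x0 (acc e e')"
proof -
  obtain ws where ws: "set ws \<subseteq> lists T" "\<And>N. \<exists>w y. in_flat_lang ws w \<and> fire (map vass_map w) x0 = Some y \<and> Rel N y e"
    using assms(1) by (auto simp: approx_def)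
  show ?thesis unfolding approx_def
  proof (intro exI[of _ "ws @ [u]"] conjI allI)
    show "set (ws @ [u]) \<subseteq> lists T" using ws(1) assms(2) by auto
  next
    fix N
    obtain w y where w: "in_flat_lang ws w" "fire (map vass_map w) x0 = Some y" "Rel (N + N * wcost u) y e"
      using ws(2) by blast
    from pump[OF assms(3,4) w(3)] obtain y' where y': "fire (map vass_map (concat (replicate N u))) y = Some y'"
      "Rel N y' e" "\<forall>i m m'. snd e i = enat m \<longrightarrow> snd e' i = enat m' \<longrightarrow> snd y' i = snd y i + N * (m' - m)"
      by blast
    have "Rel N y' (acc e e')"
      unfolding Rel_def
    proof (intro conjI allI impI)
      show "fst y' = fst (acc e e')" using y'(2) assms(4) by (simp add: Rel_def ole_def acc_def)
    next
      fix i assume inf: "snd (acc e e') i = \<infinity>"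
      show "N \<le> snd y' i"
      proof (cases "snd e i < snd e' i")
        case True
        then obtain m where m: "snd e i = enat m" by (cases "snd e i") auto
        then obtain m' where m': "snd e' i = enat m'" using fire_omap_inf[OF assms(3), of i] by (cases "snd e' i") auto
        with True m have "m < m'" by simp
        then have "1 \<le> m' - m" by simp
        then have "N * 1 \<le> N * (m' - m)" by (rule mult_le_mono2)
        then have "N \<le> N * (m' - m)" by simp
        moreover have "snd y' i = snd y i + N * (m' - m)" using y'(3) m m' by blast
        ultimately show ?thesis using le_add2[of "N * (m' - m)" "snd y i"] by linarith
      next
        case False
        then have "snd e i = \<infinity>" using inf assms(4) by (auto simp: acc_def ole_def elim!: allE[of _ i])
        then show ?thesis using y'(2) by (simp add: Rel_def)
      qed
    next
      fix i m assume m: "snd (acc e e') i = enat m"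
      then have "\<not> snd e i < snd e' i" "snd e' i = enat m" by (auto simp: acc_def split: if_splits)
      then have "snd e i = enat m" using assms(4) by (auto simp: ole_def elim!: allE[of _ i])
      then show "m \<le> snd y' i" using y'(2) by (simp add: Rel_def)
    qed
    then show "\<exists>w y. in_flat_lang (ws @ [u]) w \<and> fire (map vass_map w) x0 = Some y \<and> Rel N y (acc e e')"
      using ifl_snoc[OF w(1), of u N] w(2) y'(1)
      by (intro exI[of _ "w @ concat (replicate N u)"] exI[of _ y']) (auto simp: fire_append)
  qed
qed


lemma mono_sub:
  fixes g :: "nat \<Rightarrow> enat"
  assumes "infinite Z"
  shows "\<exists>Y\<subseteq>Z. infinite Y \<and> (\<forall>i\<in>Y. \<forall>j\<in>Y. i < j \<longrightarrow> g i \<le> g j)"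
proof -
  define f where "f X = (if g (Min X) \<le> g (Max X) then 0 else (1::nat))" for X :: "nat set"
  have "\<forall>x\<in>Z. \<forall>y\<in>Z. x \<noteq> y \<longrightarrow> f {x, y} < 2" by (simp add: f_def)
  from Ramsey2[OF assms this] obtain Y t where Y: "Y \<subseteq> Z" "infinite Y" "t < 2"
    "\<forall>x\<in>Y. \<forall>y\<in>Y. x \<noteq> y \<longrightarrow> f {x, y} = t" by blast
  have fij: "f {i, j} = (if g i \<le> g j then 0 else 1)" if "i < j" for i j
  proof -
    have "Min {i, j} = i" "Max {i, j} = j" using that by auto
    then show ?thesis by (simp add: f_def)
  qed
  show ?thesis
  proof (cases "t = 0")
    case True
    have "g i \<le> g j" if "i \<in> Y" "j \<in> Y" "i < j" for i j
      using Y(4) that fij[OF that(3)] True by (auto split: if_splits)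
    with Y show ?thesis by blast
  next
    case False
    then have t1: "t = 1" using Y(3) by simp
    have dec: "g j < g i" if "i \<in> Y" "j \<in> Y" "i < j" for i j
      using Y(4) that fij[OF that(3)] t1 by (auto split: if_splits)
    from Y(2) obtain y where "y \<in> Y" by (metis finite.emptyI ex_in_conv)
    define v where "v = (LEAST v. v \<in> g ` Y)"
    have "v \<in> g ` Y" unfolding v_def by (rule LeastI) (use \<open>y \<in> Y\<close> in blast)
    then obtain i0 where i0: "i0 \<in> Y" "g i0 = v" by blast
    have vmin: "v \<le> g j" if "j \<in> Y" for j unfolding v_def by (rule Least_le) (use that in blast)
    from Y(2) obtain j where "j \<in> Y" "j > i0" using infinite_nat_iff_unbounded by blast
    with dec[OF i0(1) this(1,2)] vmin[OF \<open>j \<in> Y\<close>] i0 show ?thesis by simp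
  qed
qed

lemma comps_sub:
  fixes s :: "nat \<Rightarrow> 'k \<Rightarrow> enat"
  assumes "finite K" "infinite Z"
  shows "\<exists>Y\<subseteq>Z. infinite Y \<and> (\<forall>i\<in>Y. \<forall>j\<in>Y. i < j \<longrightarrow> (\<forall>c\<in>K. s i c \<le> s j c))"
  using assms(1)
proof induction
  case empty then show ?case using assms(2) by blast
next
  case (insert c K)
  then obtain Y where Y: "Y \<subseteq> Z" "infinite Y" "\<forall>i\<in>Y. \<forall>j\<in>Y. i < j \<longrightarrow> (\<forall>c\<in>K. s i c \<le> s j c)" by blast
  from mono_sub[OF Y(2), of "\<lambda>i. s i c"] obtain Y' where Y': "Y' \<subseteq> Y" "infinite Y'"
    "\<forall>i\<in>Y'. \<forall>j\<in>Y'. i < j \<longrightarrow> s i c \<le> s j c" by blast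
  show ?case using Y Y' by (intro exI[of _ Y']) blast
qed

lemma good:
  fixes s :: "nat \<Rightarrow> ('q::finite, 'k::finite) ost"
  shows "\<exists>i j. i < j \<and> ole (s i) (s j)"
proof -
  have "finite ((fst \<circ> s) ` UNIV)" by simp
  from inf_img_fin_dom'[OF this infinite_UNIV_nat] obtain q where
    q: "infinite ((fst \<circ> s) -` {q} \<inter> UNIV)" by blast
  define Z where "Z = {i. fst (s i) = q}"
  have Z: "infinite Z" using q by (simp add: Z_def vimage_def)
  from comps_sub[of UNIV Z "\<lambda>i. snd (s i)"] Z obtain Y where Y: "Y \<subseteq> Z" "infinite Y"
    "\<forall>i\<in>Y. \<forall>j\<in>Y. i < j \<longrightarrow> (\<forall>c. snd (s i) c \<le> snd (s j) c)" by auto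
  from Y(2) obtain i where "i \<in> Y" by (metis finite.emptyI ex_in_conv)
  from Y(2) obtain j where "j \<in> Y" "j > i" using infinite_nat_iff_unbounded by blast
  with \<open>i \<in> Y\<close> Y show ?thesis unfolding ole_def Z_def by (intro exI[of _ i] exI[of _ j]) auto
qed

lemma ole_refl: "ole e e" by (simp add: ole_def)

lemma ole_trans: "ole a b \<Longrightarrow> ole b c \<Longrightarrow> ole a c"
  by (auto simp: ole_def intro: order.trans)

lemma ostep_inf: "ostep T e f \<Longrightarrow> {i. snd f i = \<infinity>} = {i. snd e i = \<infinity>}"
proof -
  assume "ostep T e f"
  then obtain t where "omap t e = Some f" by (auto simp: ostep_def)
  from omap_inf[OF this] show ?thesis by auto
qed

lemma rt_inf: "(ostep T)\<^sup>*\<^sup>* e f \<Longrightarrow> {i. snd f i = \<infinity>} = {i. snd e i = \<infinity>}"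
  by (induction rule: rtranclp_induct) (auto dest: ostep_inf)

lemma rt_word: "(ostep T)\<^sup>*\<^sup>* e f \<Longrightarrow> \<exists>u\<in>lists T. fire (map omap u) e = Some f"
proof (induction rule: rtranclp_induct)
  case base then show ?case by (intro bexI[of _ "[]"]) auto
next
  case (step g h)
  then obtain u where "u \<in> lists T" "fire (map omap u) e = Some g" by blast
  moreover from step(2) obtain t where "t \<in> T" "omap t g = Some h" by (auto simp: ostep_def)
  ultimately show ?case by (intro bexI[of _ "u @ [t]"]) (auto simp: fire_append)
qed

lemma rt_approx:
  fixes T :: "('q,'k::finite) tr set"
  shows "approx T x0 e \<Longrightarrow> (ostep T)\<^sup>*\<^sup>* e f \<Longrightarrow> approx T x0 f"
  using rt_word approx_word by metis

lemma rt_mono: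
  assumes "(ostep T)\<^sup>*\<^sup>* e g" "ole e f"
  shows "\<exists>g'. (ostep T)\<^sup>*\<^sup>* f g' \<and> ole g g'"
  using assms(1)
proof (induction rule: rtranclp_induct)
  case base then show ?case using assms(2) by blast
next
  case (step g h)
  then obtain g' where g': "(ostep T)\<^sup>*\<^sup>* f g'" "ole g g'" by blast
  from step(2) obtain t where t: "t \<in> T" "omap t g = Some h" by (auto simp: ostep_def)
  from omap_mono[OF g'(2) t(2)] obtain h' where "omap t g' = Some h'" "ole h h'" by blast
  with t g' show ?case by (meson ostep_def rtranclp.rtrancl_into_rtrancl)
qed

lemma shortcut: "R\<^sup>*\<^sup>* a b \<Longrightarrow> (\<lambda>x y. R x y \<and> y \<noteq> a)\<^sup>*\<^sup>* a b"
proof (induction rule: rtranclp_induct)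
  case base then show ?case by simp
next
  case (step y z)
  show ?case
  proof (cases "z = a")
    case True then show ?thesis by simp
  next
    case False with step show ?thesis by (auto intro: rtranclp.rtrancl_into_rtrancl)
  qed
qed

lemma rt_sub: "(\<lambda>x y. R x y \<and> P x y)\<^sup>*\<^sup>* a b \<Longrightarrow> R\<^sup>*\<^sup>* a b"
  by (induction rule: rtranclp_induct) (auto intro: rtranclp.rtrancl_into_rtrancl)

definition nfin :: "('q,'k) ost \<Rightarrow> nat" where
  "nfin e = card {i. snd e i \<noteq> \<infinity>}"

lemma km:
  fixes T :: "('q::finite,'k::finite) tr set"
  assumes finT: "finite T"
  shows "approx T x0 e \<Longrightarrow> \<exists>E. finite E \<and> (\<forall>f\<in>E. approx T x0 f) \<and> (\<forall>g. (ostep T)\<^sup>*\<^sup>* e g \<longrightarrow> (\<exists>h\<in>E. ole g h))"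
proof (induction "nfin e" arbitrary: e rule: less_induct)
  case less
  note outerIH = less.hyps
  note eapp = less.prems
  define Om where "Om = {i. snd e i = \<infinity>}"
  define Inv where "Inv S c \<longleftrightarrow> c \<in> S \<and> (\<forall>s\<in>S. approx T x0 s \<and> (ostep T)\<^sup>*\<^sup>* s c \<and> {i. snd s i = \<infinity>} = Om)" for S c
  define Concl where "Concl S c \<longleftrightarrow> (\<exists>E. finite E \<and> (\<forall>f\<in>E. approx T x0 f) \<and>
      (\<forall>g. (\<lambda>x y. ostep T x y \<and> y \<notin> S)\<^sup>*\<^sup>* c g \<longrightarrow> (\<exists>h\<in>E. ole g h)))" for S c
  define R :: "((('q,'k) ost set) \<times> ('q,'k) ost) rel" where "R = {(x, y). \<exists>S c p. y = (S, c) \<and> x = (insert p S, p) \<and> (\<forall>s\<in>S. \<not> ole s p)}"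
  have wfR: "wf R"
    unfolding wf_iff_no_infinite_down_chain
  proof
    assume "\<exists>f. \<forall>i. (f (Suc i), f i) \<in> R"
    then obtain f where f: "\<And>i. (f (Suc i), f i) \<in> R" by blast
    define S where "S i = fst (f i)" for i
    define p where "p i = snd (f (Suc i))" for i
    have st: "S (Suc i) = insert (p i) (S i) \<and> (\<forall>s\<in>S i. \<not> ole s (p i))" for i
      using f[of i] by (auto simp: R_def S_def p_def)
    have mono: "S i \<subseteq> S j" if "i \<le> j" for i j
      using that by (induction rule: dec_induct) (use st in auto)
    have "\<not> ole (p i) (p j)" if "i < j" for i j
    proof -
      have "p i \<in> S (Suc i)" using st by auto
      then have "p i \<in> S j" using mono[of "Suc i" j] that by auto
      then show ?thesis using st[of j] by auto
    qed
    with good[of p] show False by blast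
  qed
  have inner: "\<forall>S c. x = (S, c) \<longrightarrow> Inv S c \<longrightarrow> Concl S c" for x
    using wfR
  proof (induction x rule: wf_induct_rule)
    case (less x)
    note innerIH = less
    show ?case
    proof (intro allI impI)
      fix S c assume x: "x = (S, c)" and inv: "Inv S c"
      define Succ where "Succ = {p. ostep T c p \<and> p \<notin> S}"
      have finSucc: "finite Succ"
      proof (rule finite_subset[of _ "(\<lambda>t. the (omap t c)) ` T"])
        show "Succ \<subseteq> (\<lambda>t. the (omap t c)) ` T" by (force simp: Succ_def ostep_def)
      qed (use finT in auto)
      have capp: "approx T x0 c" and cOm: "{i. snd c i = \<infinity>} = Om" using inv by (auto simp: Inv_def)
      have each: "\<exists>E. finite E \<and> (\<forall>f\<in>E. approx T x0 f) \<and>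
          (\<forall>g. (\<lambda>x y. ostep T x y \<and> y \<notin> S)\<^sup>*\<^sup>* p g \<longrightarrow> (\<exists>h\<in>E. ole g h))" if pS: "p \<in> Succ" for p
      proof -
        from pS have sp: "ostep T c p" "p \<notin> S" by (auto simp: Succ_def)
        have papp: "approx T x0 p" using rt_approx[OF capp] sp(1) by blast
        have pOm: "{i. snd p i = \<infinity>} = Om" using ostep_inf[OF sp(1)] cOm by simp
        show ?thesis
        proof (cases "\<forall>s\<in>S. \<not> ole s p")
          case True
          have rel: "((insert p S, p), x) \<in> R" unfolding R_def using True x by blast
          have inv2: "Inv (insert p S) p"
            unfolding Inv_def
          proof (rule conjI)
            show "p \<in> insert p S" by simp
          next
            show "\<forall>s\<in>insert p S. approx T x0 s \<and> (ostep T)\<^sup>*\<^sup>* s p \<and> {i. snd s i = \<infinity>} = Om"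
            proof
            fix s assume "s \<in> insert p S"
            then show "approx T x0 s \<and> (ostep T)\<^sup>*\<^sup>* s p \<and> {i. snd s i = \<infinity>} = Om"
            proof
              assume "s = p" then show ?thesis using papp pOm by simp
            next
              assume "s \<in> S"
              then show ?thesis using inv sp(1) by (auto simp: Inv_def intro: rtranclp.rtrancl_into_rtrancl)
            qed
            qed
          qed
          from innerIH[OF rel] inv2 have "Concl (insert p S) p" by blast
          then obtain E where E: "finite E" "\<forall>f\<in>E. approx T x0 f"
            "\<forall>g. (\<lambda>x y. ostep T x y \<and> y \<notin> insert p S)\<^sup>*\<^sup>* p g \<longrightarrow> (\<exists>h\<in>E. ole g h)"
            unfolding Concl_def by blast
          have eqR: "(\<lambda>x y. (ostep T x y \<and> y \<notin> S) \<and> y \<noteq> p) = (\<lambda>x y. ostep T x y \<and> y \<notin> insert p S)"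
            by auto
          show ?thesis
          proof (intro exI[of _ E] conjI allI impI)
            fix g assume "(\<lambda>x y. ostep T x y \<and> y \<notin> S)\<^sup>*\<^sup>* p g"
            from shortcut[OF this] have "(\<lambda>x y. ostep T x y \<and> y \<notin> insert p S)\<^sup>*\<^sup>* p g"
              unfolding eqR .
            then show "\<exists>h\<in>E. ole g h" using E(3) by blast
          qed (use E in auto)
        next
          case False
          then obtain s where s: "s \<in> S" "ole s p" by blast
          have sne: "s \<noteq> p" using s(1) sp(2) by blast
          have sinv: "approx T x0 s" "(ostep T)\<^sup>*\<^sup>* s c" "{i. snd s i = \<infinity>} = Om"
            using inv s(1) by (auto simp: Inv_def)
          have sp2: "(ostep T)\<^sup>*\<^sup>* s p" using sinv(2) sp(1) by (rule rtranclp.rtrancl_into_rtrancl)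
          from rt_word[OF sp2] obtain u where u: "u \<in> lists T" "fire (map omap u) s = Some p" by blast
          define f where "f = acc s p"
          have fapp: "approx T x0 f" using approx_acc[OF sinv(1) u s(2)] by (simp add: f_def)
          have nf: "nfin f < nfin e"
          proof -
            have sub: "{i. snd f i \<noteq> \<infinity>} \<subseteq> {i. snd e i \<noteq> \<infinity>}"
            proof
              fix i assume "i \<in> {i. snd f i \<noteq> \<infinity>}"
              then have "snd p i \<noteq> \<infinity>" by (auto simp: f_def acc_def split: if_splits)
              then have "i \<notin> {i. snd p i = \<infinity>}" by simp
              then have "i \<notin> {i. snd e i = \<infinity>}" using pOm by (simp add: Om_def)
              then show "i \<in> {i. snd e i \<noteq> \<infinity>}" by simp
            qed
            obtain i where i: "snd s i < snd p i"
            proof (rule ccontr)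
              assume "\<not> thesis"
              then have "\<forall>i. \<not> snd s i < snd p i" using that by blast
              with s(2) have "\<forall>i. snd s i = snd p i" by (auto simp: ole_def order.order_iff_strict)
              with s(2) have "s = p" by (auto simp: ole_def intro: prod_eqI)
              with sne show False by simp
            qed
            have "snd s i \<noteq> \<infinity>" using i by (cases "snd s i") auto
            then have "i \<notin> {i. snd s i = \<infinity>}" by simp
            then have ei: "snd e i \<noteq> \<infinity>" using sinv(3) by (simp add: Om_def)
            have fi: "snd f i = \<infinity>" using i by (simp add: f_def acc_def)
            have "{i. snd f i \<noteq> \<infinity>} \<subset> {i. snd e i \<noteq> \<infinity>}" using sub ei fi by blast
            then show ?thesis unfolding nfin_def by (simp add: psubset_card_mono)
          qed
          from outerIH[OF nf fapp] obtain Ef where Ef: "finite Ef" "\<forall>f\<in>Ef. approx T x0 f"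
            "\<forall>g. (ostep T)\<^sup>*\<^sup>* f g \<longrightarrow> (\<exists>h\<in>Ef. ole g h)" by blast
          have pf: "ole p f" by (auto simp: ole_def f_def acc_def)
          show ?thesis
          proof (intro exI[of _ Ef] conjI allI impI)
            fix g assume "(\<lambda>x y. ostep T x y \<and> y \<notin> S)\<^sup>*\<^sup>* p g"
            then have "(ostep T)\<^sup>*\<^sup>* p g" by (rule rt_sub)
            from rt_mono[OF this pf] obtain g' where "(ostep T)\<^sup>*\<^sup>* f g'" "ole g g'" by blast
            with Ef(3) show "\<exists>h\<in>Ef. ole g h" by (meson ole_trans)
          qed (use Ef in auto)
        qed
      qed
      then have "\<forall>p\<in>Succ. \<exists>E. finite E \<and> (\<forall>f\<in>E. approx T x0 f) \<and>
          (\<forall>g. (\<lambda>x y. ostep T x y \<and> y \<notin> S)\<^sup>*\<^sup>* p g \<longrightarrow> (\<exists>h\<in>E. ole g h))" by blast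
      then obtain Ep where Ep: "\<forall>p\<in>Succ. finite (Ep p) \<and> (\<forall>f\<in>Ep p. approx T x0 f) \<and>
          (\<forall>g. (\<lambda>x y. ostep T x y \<and> y \<notin> S)\<^sup>*\<^sup>* p g \<longrightarrow> (\<exists>h\<in>Ep p. ole g h))"
        by (rule bchoice[THEN exE]) blast
      show "Concl S c" unfolding Concl_def
      proof (intro exI[of _ "insert c (\<Union>p\<in>Succ. Ep p)"] conjI ballI allI impI)
        show "finite (insert c (\<Union>p\<in>Succ. Ep p))" using finSucc Ep by auto
      next
        fix f assume "f \<in> insert c (\<Union>p\<in>Succ. Ep p)"
        then show "approx T x0 f" using capp Ep by auto
      next
        fix g assume "(\<lambda>x y. ostep T x y \<and> y \<notin> S)\<^sup>*\<^sup>* c g"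
        then show "\<exists>h\<in>insert c (\<Union>p\<in>Succ. Ep p). ole g h"
        proof (cases rule: converse_rtranclpE)
          case base then show ?thesis using ole_refl by blast
        next
          case (step p)
          then have "p \<in> Succ" by (simp add: Succ_def)
          with step Ep show ?thesis by blast
        qed
      qed
    qed
  qed
  have "Inv {e} e" using eapp by (simp add: Inv_def Om_def)
  with inner have "Concl {e} e" by blast
  then obtain E where E: "finite E" "\<forall>f\<in>E. approx T x0 f"
    "\<forall>g. (\<lambda>x y. ostep T x y \<and> y \<notin> {e})\<^sup>*\<^sup>* e g \<longrightarrow> (\<exists>h\<in>E. ole g h)"
    unfolding Concl_def by blast
  show ?case
  proof (intro exI[of _ E] conjI allI impI)
    fix g assume "(ostep T)\<^sup>*\<^sup>* e g"
    from shortcut[OF this] have "(\<lambda>x y. ostep T x y \<and> y \<notin> {e})\<^sup>*\<^sup>* e g" by simp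
    with E(3) show "\<exists>h\<in>E. ole g h" by blast
  qed (use E in auto)
qed

lemma reach_emb:
  "fire (map vass_map w) x = Some y \<Longrightarrow> w \<in> lists T \<Longrightarrow> (ostep T)\<^sup>*\<^sup>* (emb x) (emb y)"
proof (induction w arbitrary: x)
  case Nil then show ?case by simp
next
  case (Cons t w)
  then obtain x1 where x1: "vass_map t x = Some x1" "fire (map vass_map w) x1 = Some y"
    by (cases "vass_map t x") auto
  then have "ostep T (emb x) (emb x1)" using Cons.prems(2) omap_emb[of t x] by (auto simp: ostep_def)
  with Cons.IH[OF x1(2)] Cons.prems(2) show ?case by (auto intro: converse_rtranclp_into_rtranclp)
qed

lemma vass_main:
  fixes T :: "('q::finite,'k::finite) tr set"
  assumes "finite T"
  shows "\<exists>ws. set ws \<subseteq> lists T \<and> (\<forall>w y. w \<in> lists T \<longrightarrow> fire (map vass_map w) x0 = Some y \<longrightarrow>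
    (\<exists>w' y'. in_flat_lang ws w' \<and> fire (map vass_map w') x0 = Some y' \<and> vass_le y y'))"
proof -
  obtain E where E: "finite E" "\<forall>f\<in>E. approx T x0 f" "\<forall>g. (ostep T)\<^sup>*\<^sup>* (emb x0) g \<longrightarrow> (\<exists>h\<in>E. ole g h)"
    using km[OF assms approx_init] by blast
  from E(2) have "\<forall>f\<in>E. \<exists>ws. set ws \<subseteq> lists T \<and>
     (\<forall>N. \<exists>w y. in_flat_lang ws w \<and> fire (map vass_map w) x0 = Some y \<and> Rel N y f)"
    by (simp add: approx_def)
  then obtain W where W: "\<forall>f\<in>E. set (W f) \<subseteq> lists T \<and>
     (\<forall>N. \<exists>w y. in_flat_lang (W f) w \<and> fire (map vass_map w) x0 = Some y \<and> Rel N y f)"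
    by (rule bchoice[THEN exE]) blast
  obtain LE where LE: "set LE = E" using finite_list[OF E(1)] by blast
  define ws where "ws = concat (map W LE)"
  show ?thesis
  proof (intro exI[of _ ws] conjI allI impI)
    show "set ws \<subseteq> lists T" using W LE by (auto simp: ws_def)
  next
    fix w y assume "w \<in> lists T" "fire (map vass_map w) x0 = Some y"
    then have "(ostep T)\<^sup>*\<^sup>* (emb x0) (emb y)" using reach_emb by blast
    then obtain h where h: "h \<in> E" "ole (emb y) h" using E(3) by blast
    from W h(1) obtain w' y' where w': "in_flat_lang (W h) w'" "fire (map vass_map w') x0 = Some y'"
      "Rel (\<Sum>i\<in>UNIV. snd y i) y' h" by blast
    have "in_flat_lang ws w'" unfolding ws_def using ifl_concat[OF w'(1)] h(1) LE by auto
    moreover have "vass_le y y'"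
      unfolding vass_le_def
    proof (intro conjI allI)
      show "fst y = fst y'" using h(2) w'(3) by (simp add: ole_def emb_def Rel_def)
    next
      fix i
      show "snd y i \<le> snd y' i"
      proof (cases "snd h i")
        case (enat m)
        then have "snd y i \<le> m" using h(2) by (auto simp: ole_def emb_def elim!: allE[of _ i])
        moreover have "m \<le> snd y' i" using w'(3) enat by (simp add: Rel_def)
        ultimately show ?thesis by simp
      next
        case infinity
        then have "(\<Sum>i\<in>UNIV. snd y i) \<le> snd y' i" using w'(3) by (simp add: Rel_def)
        moreover have "snd y i \<le> (\<Sum>i\<in>UNIV. snd y i)" by (simp add: member_le_sum)
        ultimately show ?thesis by simp
      qed
    qed
    ultimately show "\<exists>w' y'. in_flat_lang ws w' \<and> fire (map vass_map w') x0 = Some y' \<and> vass_le y y'"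
      using w'(2) by blast
  qed
qed


lemma vass_le_refl: "reflp vass_le" by (simp add: reflp_def vass_le_def)
lemma vass_le_trans: "transp vass_le" by (auto simp: transp_def vass_le_def intro: order.trans)

lemma vass_mono:
  assumes "vass_le x y" "vass_map l x = Some x'"
  shows "\<exists>y'. vass_map l y = Some y' \<and> vass_le x' y'"
proof -
  obtain q a b q' where l: "l = (q, a, b, q')" by (cases l)
  from assms(2) have x: "fst x = q" "\<And>i. a i \<le> snd x i" "x' = (q', \<lambda>i. snd x i + b i - a i)"
    by (auto simp: vass_map_def l split: if_splits)
  have le: "fst x = fst y" "\<And>i. snd x i \<le> snd y i" using assms(1) by (auto simp: vass_le_def)
  have "a i \<le> snd y i" for i using x(2)[of i] le(2)[of i] by simp
  then have "vass_map l y = Some (q', \<lambda>i. snd y i + b i - a i)" using x(1) le(1) by (simp add: vass_map_def l)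
  moreover have "vass_le x' (q', \<lambda>i. snd y i + b i - a i)"
    using le(2) x(3) by (auto simp: vass_le_def intro: diff_le_mono)
  ultimately show ?thesis by blast
qed

lemma pn_le_refl: "reflp pn_le" by (simp add: reflp_def pn_le_def)
lemma pn_le_trans: "transp pn_le" by (auto simp: transp_def pn_le_def intro: order.trans)

lemma pn_mono:
  assumes "pn_le x y" "pn_map l x = Some x'"
  shows "\<exists>y'. pn_map l y = Some y' \<and> pn_le x' y'"
proof -
  obtain a b where l: "l = (a, b)" by (cases l)
  from assms(2) have x: "\<And>i. a i \<le> x i" "x' = (\<lambda>i. x i + b i - a i)"
    by (auto simp: pn_map_def l split: if_splits)
  have le: "\<And>i. x i \<le> y i" using assms(1) by (auto simp: pn_le_def)
  have "a i \<le> y i" for i using x(1)[of i] le[of i] by simp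
  then have "pn_map l y = Some (\<lambda>i. y i + b i - a i)" by (simp add: pn_map_def l)
  moreover have "pn_le x' (\<lambda>i. y i + b i - a i)"
    using le x(2) by (auto simp: pn_le_def intro: diff_le_mono)
  ultimately show ?thesis by blast
qed

definition trp :: "('k \<Rightarrow> nat) \<times> ('k \<Rightarrow> nat) \<Rightarrow> (unit, 'k) tr" where
  "trp p = ((), fst p, snd p, ())"

definition untr :: "(unit, 'k) tr \<Rightarrow> ('k \<Rightarrow> nat) \<times> ('k \<Rightarrow> nat)" where
  "untr t = (fst (snd t), fst (snd (snd t)))"

lemma untr_trp[simp]: "untr (trp p) = p" by (simp add: untr_def trp_def)

lemma vass_trp: "vass_map (trp p) ((), x) = map_option (Pair ()) (pn_map p x)"
  by (cases p) (simp add: vass_map_def pn_map_def trp_def)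

lemma fire_trp: "fire (map vass_map (map trp w)) ((), x) = map_option (Pair ()) (fire (map pn_map w) x)"
proof (induction w arbitrary: x)
  case Nil then show ?case by simp
next
  case (Cons p w)
  then show ?case by (cases "pn_map p x") (auto simp: vass_trp)
qed

lemma pn_main:
  fixes P :: "(('k::finite \<Rightarrow> nat) \<times> ('k \<Rightarrow> nat)) set"
  assumes "finite P"
  shows "\<exists>ws. set ws \<subseteq> lists P \<and> (\<forall>w y. w \<in> lists P \<longrightarrow> fire (map pn_map w) y0 = Some y \<longrightarrow>
    (\<exists>w' y'. in_flat_lang ws w' \<and> fire (map pn_map w') y0 = Some y' \<and> pn_le y y'))"
proof -
  from vass_main[of "trp ` P" "((), y0)"] assms obtain ws' where
    ws': "set ws' \<subseteq> lists (trp ` P)" "\<forall>w y. w \<in> lists (trp ` P) \<longrightarrow> fire (map vass_map w) ((), y0) = Some y \<longrightarrow>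
    (\<exists>w' y'. in_flat_lang ws' w' \<and> fire (map vass_map w') ((), y0) = Some y' \<and> vass_le y y')"
    by blast
  show ?thesis
  proof (intro exI[of _ "map (map untr) ws'"] conjI allI impI)
    show "set (map (map untr) ws') \<subseteq> lists P"
    proof
      fix v assume "v \<in> set (map (map untr) ws')"
      then obtain u where u: "u \<in> set ws'" "v = map untr u" by auto
      with ws'(1) have "u \<in> lists (trp ` P)" by auto
      then have "map untr u \<in> lists P" by (induction u) auto
      then show "v \<in> lists P" using u(2) by simp
    qed
  next
    fix w y assume w: "w \<in> lists P" "fire (map pn_map w) y0 = Some y"
    have "map trp w \<in> lists (trp ` P)" using w(1) by auto
    moreover have "fire (map vass_map (map trp w)) ((), y0) = Some ((), y)" using w(2) fire_trp[of w y0] by simp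
    ultimately obtain w' y' where w': "in_flat_lang ws' w'" "fire (map vass_map w') ((), y0) = Some y'"
      "vass_le ((), y) y'" using ws'(2) by blast
    have w'l: "w' \<in> lists (trp ` P)" using ifl_lists[OF w'(1) ws'(1)] .
    then have eq: "map trp (map untr w') = w'" by (induction w') auto
    have "fire (map vass_map (map trp (map untr w'))) ((), y0) = Some y'" using w'(2) eq by simp
    then have "map_option (Pair ()) (fire (map pn_map (map untr w')) y0) = Some y'"
      by (simp only: fire_trp)
    then obtain y'' where y'': "fire (map pn_map (map untr w')) y0 = Some y''" "y' = ((), y'')" by auto
    have "pn_le y y''" using w'(3) y''(2) by (simp add: vass_le_def pn_le_def)
    then show "\<exists>w' y'. in_flat_lang (map (map untr) ws') w' \<and> fire (map pn_map w') y0 = Some y' \<and> pn_le y y'"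
      using ifl_map[OF w'(1)] y''(1) by blast
  qed
qed

theorem corollary5p27:
  fixes T :: "('q::finite \<times> ('k::finite \<Rightarrow> nat) \<times> ('k \<Rightarrow> nat) \<times> 'q) set"
    and x0 :: "'q \<times> ('k \<Rightarrow> nat)"
    and P :: "(('k \<Rightarrow> nat) \<times> ('k \<Rightarrow> nat)) set"
    and y0 :: "'k \<Rightarrow> nat"
  assumes "finite T" and "finite P"
  shows "cover_flattable vass_le (vass_map ` T) x0 \<and> cover_flattable pn_le (pn_map ` P) y0"
proof
  show "cover_flattable vass_le (vass_map ` T) x0"
    by (rule gen_flattable[OF assms(1) vass_le_refl vass_le_trans vass_mono vass_main[OF assms(1)]])
next
  show "cover_flattable pn_le (pn_map ` P) y0"
    by (rule gen_flattable[OF assms(2) pn_le_refl pn_le_trans pn_mono pn_main[OF assms(2)]])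
qed


end
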